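(* For every graph $G$, the following statements are equivalent: (a) $G$ is localizable; (b) $G$ has a partition of $V(G)$ into exactly $\alpha(G)$ strong cliques; (c) $G$ has a partition of $V(G)$ into $\alpha(G)$ cliques, and in every partition of $V(G)$ into $\alpha(G)$ cliques, every clique is strong; (d) $G$ is well-covered and $\theta(G)=\alpha(G)$; (e) $i(G)=\theta(G)$.
   Context: All graphs are finite, simple, undirected. A clique is strong if it intersects every maximal (inclusion-wise) independent set. A graph is localizable if its vertex set admits a partition into strong cliques. A graph is well-covered if all its maximal independent sets have the same size. $\alpha(G)$ is the independence number, $\theta(G)$ the clique cover number (minimum number of cliques partitioning $V(G)$), and $i(G)$ the independent domination number (minimum size of a maximal independent set). *)

theory Defs
  imports Main "HOL-Library.Disjoint_Sets"
begin

text \<open>A finite simple graph is given by a finite vertex set V and a symmetric,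
irreflexive edge relation E (only its restriction to V matters).\<close>

definition simple_graph :: "'a set \<Rightarrow> ('a \<Rightarrow> 'a \<Rightarrow> bool) \<Rightarrow> bool" where
  "simple_graph V E \<longleftrightarrow> finite V \<and> (\<forall>x y. E x y \<longrightarrow> E y x) \<and> (\<forall>x. \<not> E x x)"

definition is_clique :: "'a set \<Rightarrow> ('a \<Rightarrow> 'a \<Rightarrow> bool) \<Rightarrow> 'a set \<Rightarrow> bool" where
  "is_clique V E C \<longleftrightarrow> C \<subseteq> V \<and> (\<forall>x\<in>C. \<forall>y\<in>C. x \<noteq> y \<longrightarrow> E x y)"

definition is_indep :: "'a set \<Rightarrow> ('a \<Rightarrow> 'a \<Rightarrow> bool) \<Rightarrow> 'a set \<Rightarrow> bool" where
  "is_indep V E S \<longleftrightarrow> S \<subseteq> V \<and> (\<forall>x\<in>S. \<forall>y\<in>S. \<not> E x y)"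

definition maximal_indep :: "'a set \<Rightarrow> ('a \<Rightarrow> 'a \<Rightarrow> bool) \<Rightarrow> 'a set \<Rightarrow> bool" where
  "maximal_indep V E S \<longleftrightarrow> is_indep V E S \<and> (\<forall>T. is_indep V E T \<and> S \<subseteq> T \<longrightarrow> T = S)"

definition strong_clique :: "'a set \<Rightarrow> ('a \<Rightarrow> 'a \<Rightarrow> bool) \<Rightarrow> 'a set \<Rightarrow> bool" where
  "strong_clique V E C \<longleftrightarrow> is_clique V E C \<and> (\<forall>S. maximal_indep V E S \<longrightarrow> C \<inter> S \<noteq> {})"

definition clique_partition :: "'a set \<Rightarrow> ('a \<Rightarrow> 'a \<Rightarrow> bool) \<Rightarrow> 'a set set \<Rightarrow> bool" where
  "clique_partition V E P \<longleftrightarrow> partition_on V P \<and> (\<forall>C\<in>P. is_clique V E C)"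

definition localizable :: "'a set \<Rightarrow> ('a \<Rightarrow> 'a \<Rightarrow> bool) \<Rightarrow> bool" where
  "localizable V E \<longleftrightarrow> (\<exists>P. partition_on V P \<and> (\<forall>C\<in>P. strong_clique V E C))"

definition well_covered :: "'a set \<Rightarrow> ('a \<Rightarrow> 'a \<Rightarrow> bool) \<Rightarrow> bool" where
  "well_covered V E \<longleftrightarrow>
     (\<forall>S T. maximal_indep V E S \<and> maximal_indep V E T \<longrightarrow> card S = card T)"

definition alpha :: "'a set \<Rightarrow> ('a \<Rightarrow> 'a \<Rightarrow> bool) \<Rightarrow> nat" where
  "alpha V E = Max (card ` {S. is_indep V E S})"

definition theta :: "'a set \<Rightarrow> ('a \<Rightarrow> 'a \<Rightarrow> bool) \<Rightarrow> nat" where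
  "theta V E = Min (card ` {P. clique_partition V E P})"

definition indep_dom :: "'a set \<Rightarrow> ('a \<Rightarrow> 'a \<Rightarrow> bool) \<Rightarrow> nat" where
  "indep_dom V E = Min (card ` {S. maximal_indep V E S})"

end

theory Submission
  imports Defs
begin

lemma indep_le_part:
  assumes g: "simple_graph V E" and P: "clique_partition V E P" and S: "is_indep V E S"
  shows "card S \<le> card P \<and> (card S = card P \<longrightarrow> (\<forall>C\<in>P. C \<inter> S \<noteq> {}))"
proof -
  have fV: "finite V" using g by (simp add: simple_graph_def)
  have pP: "partition_on V P" using P by (simp add: clique_partition_def)
  have fP: "finite P" using finite_elements[OF fV pP] .
  have SV: "S \<subseteq> V" using S by (simp add: is_indep_def)
  define f where "f s = (SOME C. C \<in> P \<and> s \<in> C)" for s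
  have fs: "f s \<in> P \<and> s \<in> f s" if "s \<in> S" for s
  proof -
    have "\<exists>C. C \<in> P \<and> s \<in> C" using that SV partition_onD1[OF pP] by auto
    then show ?thesis unfolding f_def by (rule someI_ex)
  qed
  have inj: "inj_on f S"
  proof (rule inj_onI)
    fix s t assume st: "s \<in> S" "t \<in> S" "f s = f t"
    show "s = t"
    proof (rule ccontr)
      assume "s \<noteq> t"
      have m: "f s \<in> P" "s \<in> f s" "t \<in> f s" using fs[OF st(1)] fs[OF st(2)] st(3) by auto
      have "is_clique V E (f s)" using P m(1) by (simp add: clique_partition_def)
      hence "E s t" using m(2,3) \<open>s \<noteq> t\<close> unfolding is_clique_def by blast
      with S st show False unfolding is_indep_def by blast
    qed
  qed
  have im: "f ` S \<subseteq> P" using fs by auto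
  have le: "card S \<le> card P" using card_inj_on_le[OF inj im fP] .
  moreover have "card S = card P \<longrightarrow> (\<forall>C\<in>P. C \<inter> S \<noteq> {})"
  proof (intro impI ballI)
    fix C assume eq: "card S = card P" and C: "C \<in> P"
    have "card (f ` S) = card P" using card_image[OF inj] eq by simp
    hence "f ` S = P" using card_subset_eq[OF fP im] by simp
    then obtain s where s: "s \<in> S" "f s = C" using C by blast
    thus "C \<inter> S \<noteq> {}" using fs[OF s(1)] by auto
  qed
  ultimately show ?thesis by blast
qed

lemma strong_part_card:
  assumes g: "simple_graph V E" and pP: "partition_on V P"
    and st: "\<forall>C\<in>P. strong_clique V E C" and S: "maximal_indep V E S"
  shows "card S = card P"
proof -
  have fV: "finite V" using g by (simp add: simple_graph_def)
  have fS: "finite S" using S fV unfolding maximal_indep_def is_indep_def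
    using finite_subset by blast
  have cp: "clique_partition V E P" using pP st
    by (simp add: clique_partition_def strong_clique_def)
  have Si: "is_indep V E S" using S by (simp add: maximal_indep_def)
  define g where "g C = (SOME s. s \<in> C \<inter> S)" for C
  have gs: "g C \<in> C \<inter> S" if "C \<in> P" for C
  proof -
    have "C \<inter> S \<noteq> {}" using st that S by (simp add: strong_clique_def)
    then obtain x where "x \<in> C \<inter> S" by blast
    thus ?thesis unfolding g_def by (rule someI)
  qed
  have inj: "inj_on g P"
  proof (rule inj_onI)
    fix C D assume CD: "C \<in> P" "D \<in> P" "g C = g D"
    have d: "disjoint P" using partition_onD2[OF pP] .
    show "C = D"
    proof (rule ccontr)
      assume "C \<noteq> D"
      hence "disjnt C D" using pairwiseD[OF d CD(1) CD(2)] by blast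
      moreover have "g C \<in> C" "g C \<in> D" using gs[OF CD(1)] gs[OF CD(2)] CD(3) by auto
      ultimately show False by (auto simp: disjnt_def)
    qed
  qed
  have "g ` P \<subseteq> S" using gs by auto
  hence "card P \<le> card S" using card_inj_on_le[OF inj _ fS] by blast
  moreover have "card S \<le> card P" using indep_le_part[OF g cp Si] by blast
  ultimately show ?thesis by simp
qed

lemma alpha_facts:
  assumes g: "simple_graph V E"
  shows "(\<exists>S. maximal_indep V E S \<and> card S = alpha V E) \<and> (\<forall>S. is_indep V E S \<longrightarrow> card S \<le> alpha V E)"
proof -
  have fV: "finite V" using g by (simp add: simple_graph_def)
  have fin: "finite {S. is_indep V E S}"
    by (rule finite_subset[of _ "Pow V"]) (auto simp: is_indep_def fV)
  have ne: "{} \<in> {S. is_indep V E S}" by (simp add: is_indep_def)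
  have fi: "finite (card ` {S. is_indep V E S})" using fin by simp
  have ne2: "card ` {S. is_indep V E S} \<noteq> {}" using ne by blast
  have le: "\<forall>S. is_indep V E S \<longrightarrow> card S \<le> alpha V E"
    unfolding alpha_def using fi by auto
  obtain S where S: "is_indep V E S" "card S = alpha V E"
    using Max_in[OF fi ne2] unfolding alpha_def by auto
  have "maximal_indep V E S"
    unfolding maximal_indep_def
  proof (intro conjI allI impI)
    fix T assume T: "is_indep V E T \<and> S \<subseteq> T"
    have fT: "finite T" using T fV unfolding is_indep_def using finite_subset by blast
    have "card T \<le> card S" using le T S by auto
    thus "T = S" using card_subset_eq[OF fT] T by (metis antisym card_mono fT)
  qed (rule S(1))
  with S le show ?thesis by blast
qed

lemma theta_facts:
  assumes g: "simple_graph V E"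
  shows "(\<exists>P. clique_partition V E P \<and> card P = theta V E) \<and> (\<forall>P. clique_partition V E P \<longrightarrow> theta V E \<le> card P)"
proof -
  have fV: "finite V" using g by (simp add: simple_graph_def)
  have fin: "finite {P. clique_partition V E P}"
    by (rule finite_subset[OF _ finitely_many_partition_on[OF fV]]) (auto simp: clique_partition_def)
  have ne: "(\<lambda>x. {x}) ` V \<in> {P. clique_partition V E P}"
    using partition_on_singletons[of V] by (auto simp: clique_partition_def is_clique_def)
  have fi: "finite (card ` {P. clique_partition V E P})" using fin by simp
  have ne2: "card ` {P. clique_partition V E P} \<noteq> {}" using ne by blast
  show ?thesis using Min_in[OF fi ne2] fi unfolding theta_def by auto
qed

lemma idom_facts:
  assumes g: "simple_graph V E"
  shows "(\<exists>S. maximal_indep V E S \<and> card S = indep_dom V E) \<and> (\<forall>S. maximal_indep V E S \<longrightarrow> indep_dom V E \<le> card S)"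
proof -
  have fV: "finite V" using g by (simp add: simple_graph_def)
  have fin: "finite {S. maximal_indep V E S}"
    by (rule finite_subset[of _ "Pow V"]) (auto simp: maximal_indep_def is_indep_def fV)
  obtain S0 where "maximal_indep V E S0" using alpha_facts[OF g] by blast
  hence ne2: "card ` {S. maximal_indep V E S} \<noteq> {}" by blast
  have fi: "finite (card ` {S. maximal_indep V E S})" using fin by simp
  show ?thesis using Min_in[OF fi ne2] fi unfolding indep_dom_def by auto
qed

lemma loc_facts:
  assumes g: "simple_graph V E" and L: "localizable V E"
  shows "\<exists>P. partition_on V P \<and> (\<forall>C\<in>P. strong_clique V E C) \<and> card P = alpha V E
     \<and> theta V E = alpha V E \<and> indep_dom V E = theta V E
     \<and> (\<forall>S. maximal_indep V E S \<longrightarrow> card S = alpha V E)"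
proof -
  obtain P where P: "partition_on V P" "\<forall>C\<in>P. strong_clique V E C"
    using L by (auto simp: localizable_def)
  have cp: "clique_partition V E P" using P
    by (simp add: clique_partition_def strong_clique_def)
  have all: "\<forall>S. maximal_indep V E S \<longrightarrow> card S = card P"
    using strong_part_card[OF g P(1) P(2)] by blast
  obtain S0 where S0: "maximal_indep V E S0" "card S0 = alpha V E" using alpha_facts[OF g] by blast
  obtain Si where Si: "maximal_indep V E Si" "card Si = indep_dom V E" using idom_facts[OF g] by blast
  obtain P0 where P0: "clique_partition V E P0" "card P0 = theta V E" using theta_facts[OF g] by blast
  have a: "alpha V E = card P" using all S0 by auto
  have i: "indep_dom V E = card P" using all Si by auto
  have t1: "theta V E \<le> card P" using theta_facts[OF g] cp by auto
  have t2: "card S0 \<le> card P0" using indep_le_part[OF g P0(1)] S0(1)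
    by (simp add: maximal_indep_def)
  have "theta V E = alpha V E" using t1 t2 a S0 P0 by simp
  thus ?thesis using P a i all by auto
qed

lemma idom_loc:
  assumes g: "simple_graph V E" and eq: "indep_dom V E = theta V E"
  shows "localizable V E"
proof -
  obtain P0 where P0: "clique_partition V E P0" "card P0 = theta V E" using theta_facts[OF g] by blast
  have "\<forall>C\<in>P0. strong_clique V E C"
  proof (intro ballI)
    fix C assume C: "C \<in> P0"
    have "C \<inter> S \<noteq> {}" if S: "maximal_indep V E S" for S
    proof -
      have Si: "is_indep V E S" using S by (simp add: maximal_indep_def)
      have "indep_dom V E \<le> card S" using idom_facts[OF g] S by blast
      hence "card S = card P0" using indep_le_part[OF g P0(1) Si] eq P0(2) by simp
      thus ?thesis using indep_le_part[OF g P0(1) Si] C by blast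
    qed
    moreover have "is_clique V E C" using P0(1) C by (simp add: clique_partition_def)
    ultimately show "strong_clique V E C" by (simp add: strong_clique_def)
  qed
  thus ?thesis using P0(1) by (auto simp: localizable_def clique_partition_def)
qed

theorem mainTheorem3:
  fixes V :: "'a set" and E :: "'a \<Rightarrow> 'a \<Rightarrow> bool"
  assumes "simple_graph V E"
  shows "(localizable V E
            \<longleftrightarrow> (\<exists>P. partition_on V P \<and> card P = alpha V E \<and> (\<forall>C\<in>P. strong_clique V E C)))
       \<and> (localizable V E
            \<longleftrightarrow> ((\<exists>P. clique_partition V E P \<and> card P = alpha V E)
                 \<and> (\<forall>P. clique_partition V E P \<and> card P = alpha V E
                        \<longrightarrow> (\<forall>C\<in>P. strong_clique V E C))))
       \<and> (localizable V E \<longleftrightarrow> (well_covered V E \<and> theta V E = alpha V E))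
       \<and> (localizable V E \<longleftrightarrow> indep_dom V E = theta V E)"
proof -
  note g = assms
  have A: "localizable V E \<longleftrightarrow> (\<exists>P. partition_on V P \<and> card P = alpha V E \<and> (\<forall>C\<in>P. strong_clique V E C))"
  proof
    assume "localizable V E"
    from loc_facts[OF g this] show "\<exists>P. partition_on V P \<and> card P = alpha V E \<and> (\<forall>C\<in>P. strong_clique V E C)" by blast
  qed (auto simp: localizable_def)
  have B: "localizable V E \<longleftrightarrow> ((\<exists>P. clique_partition V E P \<and> card P = alpha V E)
                 \<and> (\<forall>P. clique_partition V E P \<and> card P = alpha V E
                        \<longrightarrow> (\<forall>C\<in>P. strong_clique V E C)))"
  proof
    assume L: "localizable V E"
    from loc_facts[OF g L] obtain P where P: "partition_on V P" "\<forall>C\<in>P. strong_clique V E C"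
      "card P = alpha V E" and all: "\<forall>S. maximal_indep V E S \<longrightarrow> card S = alpha V E" by blast
    have "clique_partition V E P" using P by (simp add: clique_partition_def strong_clique_def)
    moreover have "\<forall>Q. clique_partition V E Q \<and> card Q = alpha V E \<longrightarrow> (\<forall>C\<in>Q. strong_clique V E C)"
    proof (intro allI impI ballI)
      fix Q C assume Q: "clique_partition V E Q \<and> card Q = alpha V E" and C: "C \<in> Q"
      have "C \<inter> S \<noteq> {}" if S: "maximal_indep V E S" for S
      proof -
        have Si: "is_indep V E S" using S by (simp add: maximal_indep_def)
        have "card S = card Q" using all S Q by simp
        thus ?thesis using indep_le_part[OF g _ Si] Q C by blast
      qed
      moreover have "is_clique V E C" using Q C by (simp add: clique_partition_def)
      ultimately show "strong_clique V E C" by (simp add: strong_clique_def)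
    qed
    ultimately show "(\<exists>P. clique_partition V E P \<and> card P = alpha V E)
                 \<and> (\<forall>P. clique_partition V E P \<and> card P = alpha V E
                        \<longrightarrow> (\<forall>C\<in>P. strong_clique V E C))" using P by blast
  next
    assume "(\<exists>P. clique_partition V E P \<and> card P = alpha V E)
                 \<and> (\<forall>P. clique_partition V E P \<and> card P = alpha V E
                        \<longrightarrow> (\<forall>C\<in>P. strong_clique V E C))"
    then obtain P where "clique_partition V E P" "\<forall>C\<in>P. strong_clique V E C" by blast
    thus "localizable V E" by (auto simp: localizable_def clique_partition_def)
  qed
  have D: "localizable V E \<longleftrightarrow> indep_dom V E = theta V E"
    using loc_facts[OF g] idom_loc[OF g] by blast
  have C: "localizable V E \<longleftrightarrow> (well_covered V E \<and> theta V E = alpha V E)"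
  proof
    assume L: "localizable V E"
    from loc_facts[OF g L] show "well_covered V E \<and> theta V E = alpha V E"
      by (auto simp: well_covered_def)
  next
    assume W: "well_covered V E \<and> theta V E = alpha V E"
    obtain S0 where S0: "maximal_indep V E S0" "card S0 = alpha V E" using alpha_facts[OF g] by blast
    obtain Si where Si: "maximal_indep V E Si" "card Si = indep_dom V E" using idom_facts[OF g] by blast
    have "card S0 = card Si" using W S0(1) Si(1) unfolding well_covered_def by blast
    hence "indep_dom V E = theta V E" using S0 Si W by simp
    thus "localizable V E" using D by simp
  qed
  show ?thesis using A B C D by blast
qed

end
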